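(* For all $\theta,\theta'\in\Theta$ and $x\in\mathsf X$, $$\|P^\rho_\theta(x,\cdot)-P^\rho_{\theta'}(x,\cdot)\|_{TV}\le 4\sup_{i\in\{1,\dots,d\}}\Big|1-\frac{\rho(\theta'(i))}{\rho(\theta(i))}\Big|.$$
   Context: Let $\mathsf X\subset\mathbb R^D$ be measurable, $\lambda$ a nonnegative reference measure, $\pi$ a probability density on $\mathsf X$ w.r.t. $\lambda$. $\mathsf X=\bigcup_{i=1}^d\mathsf X_i$ is a partition into disjoint measurable strata, $\theta_\star(i)=\int_{\mathsf X_i}\pi\,d\lambda$, $\Theta=\{\theta\in(0,1)^d:\sum_i\theta(i)=1\}$. For a measurable $\rho:(0,1)\to(0,\infty)$ and $\theta\in\Theta$, $\pi^\rho_\theta(x)=(Z^\rho_\theta)^{-1}\sum_{i}\frac{\pi(x)}{\rho(\theta(i))}\mathbf 1_{\mathsf X_i}(x)$, $Z^\rho_\theta=\sum_i\frac{\theta_\star(i)}{\rho(\theta(i))}$. $P^\rho_\theta$ is the Metropolis–Hastings kernel with symmetric proposal density $q(x,y)$ w.r.t. $\lambda$ and target $\pi^\rho_\theta\,d\lambda$: $P^\rho_\theta f(x)=\int q(x,y)\alpha_\theta(x,y)f(y)\lambda(dy)+\big(1-\int q(x,y)\alpha_\theta(x,y)\lambda(dy)\big)f(x)$ with $\alpha_\theta(x,y)=1\wedge\frac{\pi^\rho_\theta(y)}{\pi^\rho_\theta(x)}$. For a signed measure $\nu$, $\|\nu\|_{TV}=\sup\{|\nu(f)|:\sup_{\mathsf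 X}|f|\le1\}$. *)

theory Defs
  imports "HOL-Analysis.Analysis"
begin

definition theta_star :: "(nat \<Rightarrow> 'a set) \<Rightarrow> 'a measure \<Rightarrow> ('a \<Rightarrow> real) \<Rightarrow> nat \<Rightarrow> real" where
  "theta_star S lam pd i = (LINT x:S i|lam. pd x)"

definition Theta :: "nat \<Rightarrow> (nat \<Rightarrow> real) set" where
  "Theta d = {\<theta>. (\<forall>i\<in>{1..d}. 0 < \<theta> i \<and> \<theta> i < 1) \<and> (\<Sum>i=1..d. \<theta> i) = 1}"

definition Zrho :: "nat \<Rightarrow> (nat \<Rightarrow> 'a set) \<Rightarrow> 'a measure \<Rightarrow> ('a \<Rightarrow> real) \<Rightarrow> (real \<Rightarrow> real)
    \<Rightarrow> (nat \<Rightarrow> real) \<Rightarrow> real" where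
  "Zrho d S lam pd \<rho> \<theta> = (\<Sum>i=1..d. theta_star S lam pd i / \<rho> (\<theta> i))"

definition pi_rho :: "nat \<Rightarrow> (nat \<Rightarrow> 'a set) \<Rightarrow> 'a measure \<Rightarrow> ('a \<Rightarrow> real) \<Rightarrow> (real \<Rightarrow> real)
    \<Rightarrow> (nat \<Rightarrow> real) \<Rightarrow> 'a \<Rightarrow> real" where
  "pi_rho d S lam pd \<rho> \<theta> x =
     (1 / Zrho d S lam pd \<rho> \<theta>) * (\<Sum>i=1..d. pd x / \<rho> (\<theta> i) * indicator (S i) x)"

text \<open>Metropolis-Hastings acceptance probability (with the HOL convention a/0 = 0).\<close>
definition mh_alpha :: "nat \<Rightarrow> (nat \<Rightarrow> 'a set) \<Rightarrow> 'a measure \<Rightarrow> ('a \<Rightarrow> real) \<Rightarrow> (real \<Rightarrow> real)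
    \<Rightarrow> (nat \<Rightarrow> real) \<Rightarrow> 'a \<Rightarrow> 'a \<Rightarrow> real" where
  "mh_alpha d S lam pd \<rho> \<theta> x y =
     min 1 (pi_rho d S lam pd \<rho> \<theta> y / pi_rho d S lam pd \<rho> \<theta> x)"

definition mh_kernel :: "'a set \<Rightarrow> nat \<Rightarrow> (nat \<Rightarrow> 'a set) \<Rightarrow> 'a measure \<Rightarrow> ('a \<Rightarrow> real)
    \<Rightarrow> ('a \<Rightarrow> 'a \<Rightarrow> real) \<Rightarrow> (real \<Rightarrow> real) \<Rightarrow> (nat \<Rightarrow> real) \<Rightarrow> ('a \<Rightarrow> real) \<Rightarrow> 'a \<Rightarrow> real" where
  "mh_kernel X d S lam pd q \<rho> \<theta> f x =
     (LINT y:X|lam. q x y * mh_alpha d S lam pd \<rho> \<theta> x y * f y)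
     + (1 - (LINT y:X|lam. q x y * mh_alpha d S lam pd \<rho> \<theta> x y)) * f x"

definition tv_kernel_diff :: "'a set \<Rightarrow> nat \<Rightarrow> (nat \<Rightarrow> 'a set) \<Rightarrow> 'a measure \<Rightarrow> ('a \<Rightarrow> real)
    \<Rightarrow> ('a \<Rightarrow> 'a \<Rightarrow> real) \<Rightarrow> (real \<Rightarrow> real) \<Rightarrow> (nat \<Rightarrow> real) \<Rightarrow> (nat \<Rightarrow> real) \<Rightarrow> 'a \<Rightarrow> real" where
  "tv_kernel_diff X d S lam pd q \<rho> \<theta> \<theta>' x =
     Sup {\<bar>mh_kernel X d S lam pd q \<rho> \<theta> f x - mh_kernel X d S lam pd q \<rho> \<theta>' f x\<bar> | f.
            f \<in> borel_measurable lam \<and> (\<forall>y\<in>X. \<bar>f y\<bar> \<le> 1)}"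

end

theory Submission imports Defs begin

lemma min1_le:
  fixes a b :: real assumes a: "0 < a" and ab: "a \<le> b"
  shows "\<bar>min 1 a - min 1 b\<bar> \<le> 1 - a / b"
proof -
  have b: "0 < b" using a ab by linarith
  have ab1: "a / b \<le> 1" using ab b by simp
  show ?thesis
  proof (cases "b \<le> 1")
    case True
    have e: "\<bar>min 1 a - min 1 b\<bar> = b - a" using True ab by simp
    have "1 - a / b - (b - a) = (b - a) * (1 - b) / b" using b by (simp add: field_simps)
    moreover have "(b - a) * (1 - b) / b \<ge> 0" using True ab b by simp
    ultimately show ?thesis using e by linarith
  next
    case False
    show ?thesis
    proof (cases "a \<le> 1")
      case True
      have e: "\<bar>min 1 a - min 1 b\<bar> = 1 - a" using True False by simp
      have "a / b \<le> a" using a False by (simp add: divide_le_eq)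
      then show ?thesis using e by linarith
    next
      case F2: False
      have "\<bar>min 1 a - min 1 b\<bar> = 0" using F2 False by simp
      then show ?thesis using ab1 by linarith
    qed
  qed
qed

lemma min1_diff:
  fixes a b :: real assumes "a > 0" "b > 0"
  shows "\<bar>min 1 a - min 1 b\<bar> \<le> \<bar>a - b\<bar> / max a b"
proof (cases "a \<le> b")
  case True
  have "\<bar>a - b\<bar> / max a b = (b - a) / b" using True by (simp add: max_def)
  also have "\<dots> = 1 - a / b" using assms by (simp add: diff_divide_distrib)
  finally show ?thesis using min1_le[OF assms(1) True] by simp
next
  case False
  have "\<bar>a - b\<bar> / max a b = (a - b) / a" using False by (simp add: max_def)
  also have "\<dots> = 1 - b / a" using assms by (simp add: diff_divide_distrib)
  finally show ?thesis using min1_le[OF assms(2)] False by (simp add: abs_minus_commute)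
qed

lemma ratio_bound:
  fixes ri rj e :: real assumes "ri > 0" "rj > 0" "\<bar>1 - ri\<bar> \<le> e" "\<bar>1 - rj\<bar> \<le> e" "e < 1/2"
  shows "\<bar>ri - rj\<bar> / max ri rj \<le> 2 * e"
proof (cases "max ri rj \<ge> 1")
  case True
  have "\<bar>ri - rj\<bar> \<le> 2 * e" using assms by linarith
  moreover have "\<bar>ri - rj\<bar> / max ri rj \<le> \<bar>ri - rj\<bar>" using True
    by (simp add: divide_le_eq mult_le_cancel_left1)
  ultimately show ?thesis by linarith
next
  case False
  then have "\<bar>ri - rj\<bar> \<le> e" "max ri rj \<ge> 1 - e" using assms by auto
  moreover have "1 - e > 0" "e \<ge> 0" using assms by auto
  ultimately have "\<bar>ri - rj\<bar> / max ri rj \<le> e / (1 - e)"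
    by (meson frac_le abs_ge_zero)
  also have "\<dots> \<le> 2 * e"
  proof -
    have "e * (e * 2) \<le> e" using assms \<open>e \<ge> 0\<close> by (intro mult_left_le) auto
    then show ?thesis using assms \<open>e \<ge> 0\<close> by (simp add: divide_le_eq algebra_simps)
  qed
  finally show ?thesis .
qed

lemma key_alpha:
  fixes a b pi pj pi' pj' e :: real
  assumes "a > 0" "b > 0" "pi > 0" "pj > 0" "pi' > 0" "pj' > 0"
    "\<bar>1 - pi' / pi\<bar> \<le> e" "\<bar>1 - pj' / pj\<bar> \<le> e"
  shows "\<bar>min 1 ((b / pj) / (a / pi)) - min 1 ((b / pj') / (a / pi'))\<bar> \<le> 2 * e"
proof (cases "e < 1/2")
  case False
  have "0 \<le> (b / pj) / (a / pi)" "0 \<le> (b / pj') / (a / pi')" using assms by auto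
  then show ?thesis using False by (auto simp: abs_le_iff)
next
  case True
  define R where "R = (b / pj) / (a / pi)"
  define ri where "ri = pi' / pi"
  define rj where "rj = pj' / pj"
  have R: "R > 0" "ri > 0" "rj > 0" using assms by (auto simp: R_def ri_def rj_def)
  have eq: "(b / pj') / (a / pi') = R * ri / rj"
    using assms by (simp add: R_def ri_def rj_def field_simps)
  have "\<bar>min 1 R - min 1 (R * ri / rj)\<bar> \<le> \<bar>R - R * ri / rj\<bar> / max R (R * ri / rj)"
    using R by (intro min1_diff) auto
  also have "\<bar>R - R * ri / rj\<bar> = (R / rj) * \<bar>rj - ri\<bar>"
  proof -
    have "R - R * ri / rj = (R / rj) * (rj - ri)" using R by (simp add: field_simps)
    then show ?thesis using R by (simp add: abs_mult)
  qed
  also have "max R (R * ri / rj) = (R / rj) * max rj ri" using R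
    by (simp add: max_mult_distrib_left field_simps)
  also have "(R / rj) * \<bar>rj - ri\<bar> / ((R / rj) * max rj ri) = \<bar>ri - rj\<bar> / max ri rj"
    using R by (simp add: abs_minus_commute max.commute)
  also have "\<dots> \<le> 2 * e" using R assms True by (intro ratio_bound) (auto simp: ri_def rj_def)
  finally have fin: "\<bar>min 1 R - min 1 (R * ri / rj)\<bar> \<le> 2 * e" .
  have "\<bar>min 1 ((b / pj) / (a / pi)) - min 1 ((b / pj') / (a / pi'))\<bar> = \<bar>min 1 R - min 1 (R * ri / rj)\<bar>"
    by (simp only: eq R_def)
  then show ?thesis using fin by simp
qed
lemma kernel_diff:
  fixes g g' f qq :: "'a \<Rightarrow> real"
  assumes X: "X \<in> sets M" and qi: "set_integrable M X qq" and q1: "(LINT y:X|M. qq y) = 1"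
    and mq: "qq \<in> borel_measurable M" and mg: "g \<in> borel_measurable M"
    and mg': "g' \<in> borel_measurable M" and mf: "f \<in> borel_measurable M"
    and q0: "\<And>y. y \<in> X \<Longrightarrow> 0 \<le> qq y"
    and g1: "\<And>y. y \<in> X \<Longrightarrow> \<bar>g y\<bar> \<le> 1"
    and g1': "\<And>y. y \<in> X \<Longrightarrow> \<bar>g' y\<bar> \<le> 1"
    and f1: "\<And>y. y \<in> X \<Longrightarrow> \<bar>f y\<bar> \<le> 1" and fx: "\<bar>f x\<bar> \<le> 1"
    and gc: "\<And>y. y \<in> X \<Longrightarrow> \<bar>g y - g' y\<bar> \<le> c"
  shows "\<bar>((LINT y:X|M. qq y * g y * f y) + (1 - (LINT y:X|M. qq y * g y)) * f x)
     - ((LINT y:X|M. qq y * g' y * f y) + (1 - (LINT y:X|M. qq y * g' y)) * f x)\<bar> \<le> 2 * c"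
proof -
  have bnd: "set_integrable M X h" if mh: "h \<in> borel_measurable M"
      and hb: "\<And>y. y \<in> X \<Longrightarrow> \<bar>h y\<bar> \<le> qq y" for h
  proof (rule set_integrable_bound[OF qi])
    show "set_borel_measurable M X h" unfolding set_borel_measurable_def
      using X mh by measurable
    show "AE x in M. x \<in> X \<longrightarrow> norm (h x) \<le> norm (qq x)"
      using hb q0 by (intro AE_I2) auto
  qed
  have abs_mult3: "\<bar>qq y * u\<bar> \<le> qq y" if "y \<in> X" "\<bar>u\<bar> \<le> 1" for y u
    using q0[OF that(1)] that(2) by (simp add: abs_mult mult_left_le)
  have gf: "\<bar>u y * f y\<bar> \<le> 1" if "y \<in> X" "\<bar>u y\<bar> \<le> 1" for u y
    using that f1[OF that(1)] by (simp add: abs_mult mult_le_one)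
  have i1: "set_integrable M X (\<lambda>y. qq y * g y * f y)"
    by (rule bnd) (use mq mg mf in measurable, use abs_mult3[OF _ gf] g1 in \<open>simp add: mult.assoc\<close>)
  have i1': "set_integrable M X (\<lambda>y. qq y * g' y * f y)"
    by (rule bnd) (use mq mg' mf in measurable, use abs_mult3[OF _ gf] g1' in \<open>simp add: mult.assoc\<close>)
  have i2: "set_integrable M X (\<lambda>y. qq y * g y)"
    by (rule bnd) (use mq mg in measurable, use abs_mult3 g1 in auto)
  have i2': "set_integrable M X (\<lambda>y. qq y * g' y)"
    by (rule bnd) (use mq mg' in measurable, use abs_mult3 g1' in auto)
  have ieq: "(\<lambda>y. qq y * (g y - g' y) * (f y - f x)) =
     (\<lambda>y. (qq y * g y * f y - qq y * g' y * f y) - (qq y * g y - qq y * g' y) * f x)"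
    by (auto simp: algebra_simps)
  have iD: "set_integrable M X (\<lambda>y. qq y * (g y - g' y) * (f y - f x))"
    unfolding ieq using i1 i1' i2 i2' by (intro set_integral_diff set_integrable_mult_left) auto
  have "(LINT y:X|M. qq y * (g y - g' y) * (f y - f x)) =
     ((LINT y:X|M. qq y * g y * f y) - (LINT y:X|M. qq y * g' y * f y))
      - ((LINT y:X|M. qq y * g y) - (LINT y:X|M. qq y * g' y)) * f x"
    unfolding ieq
    by (subst set_integral_diff(2), (intro set_integral_diff set_integrable_mult_left; use i1 i1' i2 i2' in auto)+)
       (simp add: set_integral_diff(2)[OF i1 i1'] set_integral_diff(2)[OF i2 i2'])
  then have eq: "((LINT y:X|M. qq y * g y * f y) + (1 - (LINT y:X|M. qq y * g y)) * f x)
     - ((LINT y:X|M. qq y * g' y * f y) + (1 - (LINT y:X|M. qq y * g' y)) * f x)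
     = (LINT y:X|M. qq y * (g y - g' y) * (f y - f x))" by (simp add: algebra_simps)
  have "\<bar>LINT y:X|M. qq y * (g y - g' y) * (f y - f x)\<bar>
      \<le> (LINT y:X|M. norm (qq y * (g y - g' y) * (f y - f x)))"
    using set_integral_norm_bound[OF iD] by simp
  also have "\<dots> \<le> (LINT y:X|M. qq y * (2 * c))"
  proof (rule set_integral_mono)
    show "set_integrable M X (\<lambda>y. norm (qq y * (g y - g' y) * (f y - f x)))"
      using iD by (rule set_integrable_norm)
    show "set_integrable M X (\<lambda>y. qq y * (2 * c))" using qi by auto
    fix y assume y: "y \<in> X"
    have "\<bar>f y - f x\<bar> \<le> 2" using f1[OF y] fx by linarith
    then have "\<bar>g y - g' y\<bar> * \<bar>f y - f x\<bar> \<le> c * 2"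
      using gc[OF y] by (intro mult_mono) auto
    then have "qq y * (\<bar>g y - g' y\<bar> * \<bar>f y - f x\<bar>) \<le> qq y * (2 * c)"
      using q0[OF y] by (simp add: mult_left_mono mult.commute)
    then show "norm (qq y * (g y - g' y) * (f y - f x)) \<le> qq y * (2 * c)"
      by (simp add: abs_mult abs_of_nonneg[OF q0[OF y]] mult.assoc)
  qed
  also have "\<dots> = 2 * c" using q1 by simp
  finally show ?thesis unfolding eq .
qed


lemma pi_single:
  assumes k: "k \<in> {1..d}" and z: "z \<in> S k" and dj: "disjoint_family_on S {1..d}"
  shows "pi_rho d S lam pd \<rho> t z = 1 / Zrho d S lam pd \<rho> t * (pd z / \<rho> (t k))"
proof -
  have "(\<Sum>i=1..d. pd z / \<rho> (t i) * indicator (S i) z)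
      = pd z / \<rho> (t k) * indicator (S k) z + (\<Sum>i\<in>{1..d}-{k}. pd z / \<rho> (t i) * indicator (S i) z)"
    using k by (simp add: sum.remove)
  also have "(\<Sum>i\<in>{1..d}-{k}. pd z / \<rho> (t i) * indicator (S i) z) = 0"
  proof (rule sum.neutral, rule ballI)
    fix i assume i: "i \<in> {1..d} - {k}"
    then have "z \<notin> S i" using dj k z unfolding disjoint_family_on_def by blast
    then show "pd z / \<rho> (t i) * indicator (S i) z = 0" by simp
  qed
  finally show ?thesis using z by (simp add: pi_rho_def)
qed

theorem lemma6p3:
  fixes X :: "'a::euclidean_space set" and lam :: "'a measure"
    and pd :: "'a \<Rightarrow> real" and d :: nat and S :: "nat \<Rightarrow> 'a set"
    and \<rho> :: "real \<Rightarrow> real" and q :: "'a \<Rightarrow> 'a \<Rightarrow> real"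
    and \<theta> \<theta>' :: "nat \<Rightarrow> real" and x :: 'a
  assumes lam_borel: "sets lam = sets borel"
    and X_meas: "X \<in> sets lam"
    and pi_meas: "pd \<in> borel_measurable lam"
    and pi_nonneg: "\<And>y. y \<in> X \<Longrightarrow> 0 \<le> pd y"
    and pi_int: "set_integrable lam X pd"
    and pi_prob: "(LINT y:X|lam. pd y) = 1"
    and S_meas: "\<And>i. i \<in> {1..d} \<Longrightarrow> S i \<in> sets lam"
    and S_disj: "disjoint_family_on S {1..d}"
    and S_cover: "(\<Union>i\<in>{1..d}. S i) = X"
    and rho_meas: "\<rho> \<in> borel_measurable borel"
    and rho_pos: "\<And>t. 0 < t \<Longrightarrow> t < 1 \<Longrightarrow> 0 < \<rho> t"
    and q_meas: "\<And>y. y \<in> X \<Longrightarrow> q y \<in> borel_measurable lam"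
    and q_nonneg: "\<And>y z. y \<in> X \<Longrightarrow> z \<in> X \<Longrightarrow> 0 \<le> q y z"
    and q_sym: "\<And>y z. y \<in> X \<Longrightarrow> z \<in> X \<Longrightarrow> q y z = q z y"
    and q_int: "\<And>y. y \<in> X \<Longrightarrow> set_integrable lam X (q y)"
    and q_prob: "\<And>y. y \<in> X \<Longrightarrow> (LINT z:X|lam. q y z) = 1"
    and theta: "\<theta> \<in> Theta d" and theta': "\<theta>' \<in> Theta d"
    and x: "x \<in> X"
  shows "tv_kernel_diff X d S lam pd q \<rho> \<theta> \<theta>' x
           \<le> 4 * (MAX i\<in>{1..d}. \<bar>1 - \<rho> (\<theta>' i) / \<rho> (\<theta> i)\<bar>)"
proof -
  have d1: "d \<ge> 1" using theta by (cases d) (auto simp: Theta_def)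
  have th: "\<And>i. i \<in> {1..d} \<Longrightarrow> 0 < \<theta> i \<and> \<theta> i < 1" using theta by (auto simp: Theta_def)
  have th': "\<And>i. i \<in> {1..d} \<Longrightarrow> 0 < \<theta>' i \<and> \<theta>' i < 1" using theta' by (auto simp: Theta_def)
  have rp: "\<And>i. i \<in> {1..d} \<Longrightarrow> 0 < \<rho> (\<theta> i)" using th rho_pos by blast
  have rp': "\<And>i. i \<in> {1..d} \<Longrightarrow> 0 < \<rho> (\<theta>' i)" using th' rho_pos by blast
  define e where "e = (MAX i\<in>{1..d}. \<bar>1 - \<rho> (\<theta>' i) / \<rho> (\<theta> i)\<bar>)"
  have e_ge: "\<And>i. i \<in> {1..d} \<Longrightarrow> \<bar>1 - \<rho> (\<theta>' i) / \<rho> (\<theta> i)\<bar> \<le> e"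
    unfolding e_def by (intro Max_ge) auto
  have e0: "0 \<le> e" using e_ge[of 1] d1 by force
  have ts0: "\<And>i. i \<in> {1..d} \<Longrightarrow> 0 \<le> theta_star S lam pd i"
  proof -
    fix i assume i: "i \<in> {1..d}"
    have "\<And>z. z \<in> S i \<Longrightarrow> 0 \<le> pd z" using S_cover pi_nonneg i by blast
    then have nn: "\<And>z. 0 \<le> indicator (S i) z *\<^sub>R pd z" by (simp add: indicator_def)
    show "0 \<le> theta_star S lam pd i"
      unfolding theta_star_def set_lebesgue_integral_def by (rule Bochner_Integration.integral_nonneg) (rule nn)
  qed
  have Z0: "0 \<le> Zrho d S lam pd \<rho> t" if "\<And>i. i \<in> {1..d} \<Longrightarrow> 0 < \<rho> (t i)" for t
    unfolding Zrho_def by (rule sum_nonneg, rule divide_nonneg_pos, erule ts0, erule that)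
  have Zzero: "Zrho d S lam pd \<rho> t = 0 \<longleftrightarrow> (\<forall>i\<in>{1..d}. theta_star S lam pd i = 0)"
    if "\<And>i. i \<in> {1..d} \<Longrightarrow> 0 < \<rho> (t i)" for t
  proof -
    have "Zrho d S lam pd \<rho> t = 0 \<longleftrightarrow> (\<forall>i\<in>{1..d}. theta_star S lam pd i / \<rho> (t i) = 0)"
      unfolding Zrho_def using ts0 that by (intro sum_nonneg_eq_0_iff) (auto intro!: divide_nonneg_pos)
    also have "\<dots> \<longleftrightarrow> (\<forall>i\<in>{1..d}. theta_star S lam pd i = 0)"
    proof (intro ball_cong refl)
      fix i assume i: "i \<in> {1..d}"
      then have "\<rho> (t i) \<noteq> 0" using that[OF i] by simp
      then show "(theta_star S lam pd i / \<rho> (t i) = 0) = (theta_star S lam pd i = 0)" by simp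
    qed
    finally show ?thesis .
  qed
  have pinn: "0 \<le> pi_rho d S lam pd \<rho> t y" if "\<And>i. i \<in> {1..d} \<Longrightarrow> 0 < \<rho> (t i)" "y \<in> X" for t y
  proof -
    have zt: "0 \<le> Zrho d S lam pd \<rho> t" by (rule Z0) (erule that(1))
    show ?thesis
      unfolding pi_rho_def using zt that pi_nonneg
      by (intro mult_nonneg_nonneg sum_nonneg) (auto intro!: divide_nonneg_pos)
  qed
  have Zth: "Zrho d S lam pd \<rho> \<theta> = 0 \<longleftrightarrow> (\<forall>i\<in>{1..d}. theta_star S lam pd i = 0)"
    by (rule Zzero) (erule rp)
  have Zth': "Zrho d S lam pd \<rho> \<theta>' = 0 \<longleftrightarrow> (\<forall>i\<in>{1..d}. theta_star S lam pd i = 0)"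
    by (rule Zzero) (erule rp')
  have pim: "(\<lambda>z. pi_rho d S lam pd \<rho> t z) \<in> borel_measurable lam" for t
    unfolding pi_rho_def
    by (intro borel_measurable_times borel_measurable_const borel_measurable_sum
        borel_measurable_divide pi_meas borel_measurable_indicator S_meas) auto
  have am: "(\<lambda>y. mh_alpha d S lam pd \<rho> t x y) \<in> borel_measurable lam" for t
    unfolding mh_alpha_def using pim[of t] by measurable
  have a1: "\<bar>mh_alpha d S lam pd \<rho> t x y\<bar> \<le> 1"
    if "\<And>i. i \<in> {1..d} \<Longrightarrow> 0 < \<rho> (t i)" "y \<in> X" for t y
  proof -
    have "0 \<le> pi_rho d S lam pd \<rho> t y / pi_rho d S lam pd \<rho> t x"
      using pinn[OF that(1) that(2)] pinn[OF that(1) x] by simp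
    then show ?thesis unfolding mh_alpha_def by auto
  qed
  have adiff: "\<bar>mh_alpha d S lam pd \<rho> \<theta> x y - mh_alpha d S lam pd \<rho> \<theta>' x y\<bar> \<le> 2 * e"
    if y: "y \<in> X" for y
  proof -
    obtain i where i: "i \<in> {1..d}" "x \<in> S i" using S_cover x by blast
    obtain j where j: "j \<in> {1..d}" "y \<in> S j" using S_cover y by blast
    show ?thesis
    proof (cases "Zrho d S lam pd \<rho> \<theta> = 0")
      case True
      then have T': "Zrho d S lam pd \<rho> \<theta>' = 0" using Zth Zth' by blast
      show ?thesis using True T' e0 by (simp add: mh_alpha_def pi_rho_def)
    next
      case False
      then have F': "Zrho d S lam pd \<rho> \<theta>' \<noteq> 0" using Zth Zth' by blast
      have r1: "mh_alpha d S lam pd \<rho> t x y = min 1 ((pd y / \<rho> (t j)) / (pd x / \<rho> (t i)))"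
        if "Zrho d S lam pd \<rho> t \<noteq> 0" for t
        unfolding mh_alpha_def pi_single[OF i(1) i(2) S_disj] pi_single[OF j(1) j(2) S_disj]
        using that by simp
      show ?thesis
      proof (cases "pd x = 0 \<or> pd y = 0")
        case True
        then show ?thesis unfolding r1[OF False] r1[OF F'] using e0 by auto
      next
        case False2: False
        have "0 < pd x" "0 < pd y" using False2 pi_nonneg x y by (auto simp: less_le)
        then show ?thesis unfolding r1[OF False] r1[OF F']
          by (intro key_alpha rp rp' e_ge i j)
      qed
    qed
  qed
  show ?thesis unfolding tv_kernel_diff_def
  proof (rule cSup_least)
    show "{\<bar>mh_kernel X d S lam pd q \<rho> \<theta> f x - mh_kernel X d S lam pd q \<rho> \<theta>' f x\<bar> | f.
            f \<in> borel_measurable lam \<and> (\<forall>y\<in>X. \<bar>f y\<bar> \<le> 1)} \<noteq> {}"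
    proof -
      have "(\<lambda>_. 0::real) \<in> borel_measurable lam \<and> (\<forall>y\<in>X. \<bar>(\<lambda>_. 0::real) y\<bar> \<le> 1)" by simp
      then show ?thesis by blast
    qed
  next
    fix v assume "v \<in> {\<bar>mh_kernel X d S lam pd q \<rho> \<theta> f x - mh_kernel X d S lam pd q \<rho> \<theta>' f x\<bar> | f.
            f \<in> borel_measurable lam \<and> (\<forall>y\<in>X. \<bar>f y\<bar> \<le> 1)}"
    then obtain f where v: "v = \<bar>mh_kernel X d S lam pd q \<rho> \<theta> f x - mh_kernel X d S lam pd q \<rho> \<theta>' f x\<bar>"
      and fm: "f \<in> borel_measurable lam" and f1: "\<forall>y\<in>X. \<bar>f y\<bar> \<le> 1" by blast
    have "v \<le> 2 * (2 * e)" unfolding v mh_kernel_def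
      by (rule kernel_diff[OF X_meas q_int[OF x] q_prob[OF x] q_meas[OF x] am am fm])
         (use q_nonneg x a1 rp rp' f1 adiff in auto)
    then show "v \<le> 4 * (MAX i\<in>{1..d}. \<bar>1 - \<rho> (\<theta>' i) / \<rho> (\<theta> i)\<bar>)" by (simp add: e_def)
  qed
qed

end
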